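(* Let $A$ be an associative algebra and $\{ N_\alpha : A \to A \}_{\alpha \in \Omega}$ a Nijenhuis family. Then $(A, \{ \prec_\alpha, \succ_\alpha, \curlyvee_{\alpha, \beta} \}_{\alpha, \beta \in \Omega})$ is an NS-family algebra, where $a \prec_\alpha b := a \cdot N_\alpha (b)$, $a \succ_\alpha b := N_\alpha (a) \cdot b$ and $a \curlyvee_{\alpha, \beta} b := - N_{\alpha \beta} (a \cdot b)$.
   Context: $\Omega$ is a semigroup. A Nijenhuis family is a collection of linear maps $N_\alpha:A\to A$ with $N_\alpha(a) \cdot N_\beta(b) = N_{\alpha \beta} \big( N_\alpha (a) \cdot b + a \cdot N_\beta(b) - N_{\alpha \beta}(a \cdot b) \big)$ for all $a,b,\alpha,\beta$. An NS-family algebra is a vector space $D$ with bilinear maps $\{ \prec_\alpha, \succ_\alpha, \curlyvee_{\alpha, \beta}\}_{\alpha, \beta \in \Omega}$ such that for all $x,y,z$, $\alpha,\beta,\gamma$: (1) $(x \prec_\alpha y) \prec_\beta z = x \prec_{\alpha \beta} ( y \prec_\beta z + y \succ_\alpha z + y \curlyvee_{\alpha, \beta} z)$; (2) $(x \succ_\alpha y) \prec_\beta z = x \succ_\alpha (y \prec_\beta z)$; (3) $(x \prec_\beta y + x \succ_\alpha y + x \curlyvee_{\alpha, \beta} y) \succ_{\alpha \beta} z = x \succ_\alpha (y \succ_\beta z)$; (4) $( x \prec_\beta y + x \succ_\alpha y + x \curlyvee_{\alpha, \beta} y ) \curlyvee_{\alpha \beta, \gamma} z + (x \curlyvee_{\alpha,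 \beta} y) \prec_\gamma z = x \succ_\alpha (y \curlyvee_{\beta, \gamma} z) + x \curlyvee_{\alpha, \beta \gamma} ( y \prec_\gamma z + y \succ_\beta z + y \curlyvee_{\beta, \gamma} z )$. *)

theory Defs
  imports Main "HOL.Vector_Spaces"
begin

definition assoc_algebra :: "('k::field \<Rightarrow> 'a::ring \<Rightarrow> 'a) \<Rightarrow> bool" where
  "assoc_algebra scale \<longleftrightarrow> Vector_Spaces.vector_space scale \<and>
     (\<forall>c a b. scale c (a * b) = scale c a * b \<and> scale c (a * b) = a * scale c b)"

definition bilinear_map :: "('k::field \<Rightarrow> 'v::ab_group_add \<Rightarrow> 'v) \<Rightarrow> ('v \<Rightarrow> 'v \<Rightarrow> 'v) \<Rightarrow> bool" where
  "bilinear_map scale f \<longleftrightarrow>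
     (\<forall>x. Vector_Spaces.linear scale scale (f x)) \<and>
     (\<forall>y. Vector_Spaces.linear scale scale (\<lambda>x. f x y))"

definition nijenhuis_family ::
  "('k::field \<Rightarrow> 'a::ring \<Rightarrow> 'a) \<Rightarrow> ('w::semigroup_mult \<Rightarrow> 'a \<Rightarrow> 'a) \<Rightarrow> bool" where
  "nijenhuis_family scale N \<longleftrightarrow>
     (\<forall>\<alpha>. Vector_Spaces.linear scale scale (N \<alpha>)) \<and>
     (\<forall>\<alpha> \<beta> a b. N \<alpha> a * N \<beta> b =
        N (\<alpha> * \<beta>) (N \<alpha> a * b + a * N \<beta> b - N (\<alpha> * \<beta>) (a * b)))"

definition NS_family_algebra ::
  "('k::field \<Rightarrow> 'v::ab_group_add \<Rightarrow> 'v) \<Rightarrow> ('w::semigroup_mult \<Rightarrow> 'v \<Rightarrow> 'v \<Rightarrow> 'v)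
   \<Rightarrow> ('w \<Rightarrow> 'v \<Rightarrow> 'v \<Rightarrow> 'v) \<Rightarrow> ('w \<Rightarrow> 'w \<Rightarrow> 'v \<Rightarrow> 'v \<Rightarrow> 'v) \<Rightarrow> bool" where
  "NS_family_algebra scale prec succ curly \<longleftrightarrow>
     Vector_Spaces.vector_space scale \<and>
     (\<forall>\<alpha>. bilinear_map scale (prec \<alpha>)) \<and>
     (\<forall>\<alpha>. bilinear_map scale (succ \<alpha>)) \<and>
     (\<forall>\<alpha> \<beta>. bilinear_map scale (curly \<alpha> \<beta>)) \<and>
     (\<forall>x y z \<alpha> \<beta>. prec \<beta> (prec \<alpha> x y) z =
        prec (\<alpha> * \<beta>) x (prec \<beta> y z + succ \<alpha> y z + curly \<alpha> \<beta> y z)) \<and>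
     (\<forall>x y z \<alpha> \<beta>. prec \<beta> (succ \<alpha> x y) z = succ \<alpha> x (prec \<beta> y z)) \<and>
     (\<forall>x y z \<alpha> \<beta>. succ (\<alpha> * \<beta>) (prec \<beta> x y + succ \<alpha> x y + curly \<alpha> \<beta> x y) z =
        succ \<alpha> x (succ \<beta> y z)) \<and>
     (\<forall>x y z \<alpha> \<beta> \<gamma>.
        curly (\<alpha> * \<beta>) \<gamma> (prec \<beta> x y + succ \<alpha> x y + curly \<alpha> \<beta> x y) z
          + prec \<gamma> (curly \<alpha> \<beta> x y) z =
        succ \<alpha> x (curly \<beta> \<gamma> y z)
          + curly \<alpha> (\<beta> * \<gamma>) x (prec \<gamma> y z + succ \<beta> y z + curly \<beta> \<gamma> y z))"

end

theory Submission
  imports Defs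
begin

theorem proposition3p17:
  fixes scale :: "'k::field \<Rightarrow> 'a::ring \<Rightarrow> 'a"
    and N :: "'w::semigroup_mult \<Rightarrow> 'a \<Rightarrow> 'a"
  assumes "assoc_algebra scale"
    and "nijenhuis_family scale N"
  shows "NS_family_algebra scale
           (\<lambda>\<alpha> a b. a * N \<alpha> b)
           (\<lambda>\<alpha> a b. N \<alpha> a * b)
           (\<lambda>\<alpha> \<beta> a b. - N (\<alpha> * \<beta>) (a * b))"
proof -
  have vs: "Vector_Spaces.vector_space scale"
    and sc: "\<And>c a b. scale c (a * b) = scale c a * b" "\<And>c a b. scale c (a * b) = a * scale c b"
    using assms(1) unfolding assoc_algebra_def by blast+
  have lin: "\<And>\<alpha>. Vector_Spaces.linear scale scale (N \<alpha>)"
    and nij: "\<And>\<alpha> \<beta> a b. N \<alpha> a * N \<beta> b =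
        N (\<alpha> * \<beta>) (N \<alpha> a * b + a * N \<beta> b - N (\<alpha> * \<beta>) (a * b))"
    using assms(2) unfolding nijenhuis_family_def by auto
  have add: "\<And>\<alpha> x y. N \<alpha> (x + y) = N \<alpha> x + N \<alpha> y"
    and nsc: "\<And>\<alpha> c x. N \<alpha> (scale c x) = scale c (N \<alpha> x)"
    using lin unfolding linear_iff by auto
  have diff: "N \<alpha> (x - y) = N \<alpha> x - N \<alpha> y" for \<alpha> x y
    using add[of \<alpha> "x - y" y] by (simp add: algebra_simps)
  have neg: "N \<alpha> (- x) = - N \<alpha> x" for \<alpha> x
    using diff[of \<alpha> 0 x] diff[of \<alpha> 0 0] by simp
  have vsneg: "scale c (- x) = - scale c x" for c x
    by (rule module.scale_minus_right) (use vs in \<open>simp add: vector_space_def module_def\<close>)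
  have lin_of: "Vector_Spaces.linear scale scale f"
    if "\<And>x y. f (x + y) = f x + f y" "\<And>c x. f (scale c x) = scale c (f x)" for f
    using that vs unfolding linear_iff by auto
  have "bilinear_map scale (\<lambda>a b. a * N \<alpha> b)" for \<alpha>
    unfolding bilinear_map_def
    by (auto intro!: lin_of simp: add nsc sc(1)[symmetric] sc(2)[symmetric] distrib_left distrib_right)
  moreover have "bilinear_map scale (\<lambda>a b. N \<alpha> a * b)" for \<alpha>
    unfolding bilinear_map_def
    by (auto intro!: lin_of simp: add nsc sc(1)[symmetric] sc(2)[symmetric] distrib_left distrib_right)
  moreover have "bilinear_map scale (\<lambda>a b. - N (\<alpha> * \<beta>) (a * b))" for \<alpha> \<beta>
    unfolding bilinear_map_def
    by (auto intro!: lin_of simp: add nsc sc(1)[symmetric] sc(2)[symmetric] distrib_left distrib_right vsneg)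
  moreover have "x * N (\<alpha> * \<beta>) (y * N \<beta> z + N \<alpha> y * z + - N (\<alpha> * \<beta>) (y * z))
       = x * N \<alpha> y * N \<beta> z" for x y z \<alpha> \<beta>
  proof -
    have h: "y * N \<beta> z + N \<alpha> y * z + - N (\<alpha> * \<beta>) (y * z) = N \<alpha> y * z + y * N \<beta> z - N (\<alpha> * \<beta>) (y * z)"
      by (simp add: algebra_simps)
    show ?thesis unfolding h nij[of \<alpha> y \<beta> z, symmetric] by (simp add: mult.assoc)
  qed
  moreover have "N (\<alpha> * \<beta>) (x * N \<beta> y + N \<alpha> x * y + - N (\<alpha> * \<beta>) (x * y)) * z
       = N \<alpha> x * (N \<beta> y * z)" for x y z \<alpha> \<beta>
  proof -
    have h: "x * N \<beta> y + N \<alpha> x * y + - N (\<alpha> * \<beta>) (x * y) = N \<alpha> x * y + x * N \<beta> y - N (\<alpha> * \<beta>) (x * y)"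
      by (simp add: algebra_simps)
    show ?thesis unfolding h nij[of \<alpha> x \<beta> y, symmetric] by (simp add: mult.assoc)
  qed
  moreover have "- N (\<alpha> * \<beta> * \<gamma>) ((x * N \<beta> y + N \<alpha> x * y + - N (\<alpha> * \<beta>) (x * y)) * z) +
          - N (\<alpha> * \<beta>) (x * y) * N \<gamma> z =
       N \<alpha> x * - N (\<beta> * \<gamma>) (y * z) +
          - N (\<alpha> * (\<beta> * \<gamma>)) (x * (y * N \<gamma> z + N \<beta> y * z + - N (\<beta> * \<gamma>) (y * z)))"
    for x y z \<alpha> \<beta> \<gamma>
  proof -
    have e1: "N (\<alpha> * \<beta>) (x * y) * N \<gamma> z = N (\<alpha> * \<beta> * \<gamma>) (N (\<alpha> * \<beta>) (x * y) * z + x * y * N \<gamma> z - N (\<alpha> * \<beta> * \<gamma>) (x * y * z))"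
      using nij[of "\<alpha> * \<beta>" "x * y" \<gamma> z] .
    have e2: "N \<alpha> x * N (\<beta> * \<gamma>) (y * z) = N (\<alpha> * \<beta> * \<gamma>) (N \<alpha> x * (y * z) + x * N (\<beta> * \<gamma>) (y * z) - N (\<alpha> * \<beta> * \<gamma>) (x * (y * z)))"
      using nij[of \<alpha> x "\<beta> * \<gamma>" "y * z"] by (simp add: mult.assoc)
    show ?thesis
      by (simp add: e1 e2 add diff neg mult.assoc algebra_simps)
  qed
  ultimately show ?thesis
    unfolding NS_family_algebra_def using vs by (simp add: mult.assoc)
qed

end
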